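(* Let $\{C_i\}_{i\in\Gamma}$ be a family of compact Hausdorff spaces, $X=\bigsqcup_{i\in\Gamma}C_i$ their topological coproduct, $\pi:X\to\Gamma$ with $\pi(C_i)=\{i\}$, and $\varepsilon=\{e\subseteq X\times X:\exists f\subseteq\Gamma\times\Gamma \text{ with } f\setminus\Delta\Gamma \text{ finite and } e\subseteq(\pi\times\pi)^{-1}(f)\}$. Let $X+_fY$ be a Hausdorff compact space with $Y$ compact Hausdorff and $f$ admissible, and let $\sim$ be the equivalence relation on $X+_fY$ given by $\sim\ =\Delta(X+_fY)\cup\bigcup_{i\in\Gamma}C_i\times C_i$. Then $X+_fY\in\mathrm{Pers}(\varepsilon)$ if and only if the quotient $(X+_fY)/\!\sim$ is Hausdorff.
   Context: Artin–Wraith glueing: $\mathrm{Closed}(A)$ is the set of closed subsets of $A$; $f:\mathrm{Closed}(A)\to\mathrm{Closed}(B)$ is admissible if $f(\emptyset)=\emptyset$ and $f$ preserves finite unions; $A+_fB$ is $A\sqcup B$ with closed sets the $D$ such that $D\cap A$ is closed in $A$, $D\cap B$ closed in $B$ and $f(D\cap A)\subseteq D$. $\mathrm{Comp}(X)$ is the category of compact spaces $X+_fW$ with $W$ compact Hausdorff, morphisms continuous maps which are the identity on $X$. For a Hausdorff compactification $X+_fW$ of $X$ ($X$ dense), $e\subseteq X\times X$ is perspective if $\mathrm{Cl}_{(X+_fW)^2}(e)\cap((X+_fW)^2-X^2)\subseteq\{(p,p):p\in W\}$; $\varepsilon_f$ is the set of perspective sets; the compactification is perspective if $\varepsilon\subseteq\varepsilon_f$;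 $\mathrm{Pers}(\varepsilon)$ is the full subcategory of $\mathrm{Comp}(X)$ of perspective compactifications. *)

theory Defs
  imports "HOL-Analysis.Analysis"
begin

definition Closed :: "'a topology \<Rightarrow> 'a set set" where
  "Closed A = {D. closedin A D}"

definition admissible :: "'a topology \<Rightarrow> 'b topology \<Rightarrow> ('a set \<Rightarrow> 'b set) \<Rightarrow> bool" where
  "admissible A B f \<longleftrightarrow>
     (\<forall>D\<in>Closed A. f D \<in> Closed B) \<and> f {} = {} \<and>
     (\<forall>D\<in>Closed A. \<forall>E\<in>Closed A. f (D \<union> E) = f D \<union> f E)"

definition glue_closed :: "'a topology \<Rightarrow> 'b topology \<Rightarrow> ('a set \<Rightarrow> 'b set) \<Rightarrow> ('a + 'b) set \<Rightarrow> bool" where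
  "glue_closed A B f D \<longleftrightarrow>
     D \<subseteq> Inl ` topspace A \<union> Inr ` topspace B \<and>
     closedin A (Inl -` D) \<and> closedin B (Inr -` D) \<and> Inr ` f (Inl -` D) \<subseteq> D"

definition glue :: "'a topology \<Rightarrow> 'b topology \<Rightarrow> ('a set \<Rightarrow> 'b set) \<Rightarrow> ('a + 'b) topology" where
  "glue A B f = topology (\<lambda>U. U \<subseteq> Inl ` topspace A \<union> Inr ` topspace B \<and>
       glue_closed A B f ((Inl ` topspace A \<union> Inr ` topspace B) - U))"

definition perspective_sets :: "'a topology \<Rightarrow> 'b topology \<Rightarrow> ('a set \<Rightarrow> 'b set) \<Rightarrow> ('a \<times> 'a) set set" where
  "perspective_sets X W f =
     {e. e \<subseteq> topspace X \<times> topspace X \<and>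
         (let G = glue X W f in
            (prod_topology G G) closure_of ((\<lambda>(a, b). (Inl a, Inl b)) ` e)
              \<inter> ((topspace G \<times> topspace G) - (Inl ` topspace X \<times> Inl ` topspace X))
            \<subseteq> {(Inr p, Inr p) | p. p \<in> topspace W})}"

definition in_Pers :: "('a \<times> 'a) set set \<Rightarrow> 'a topology \<Rightarrow> 'b topology \<Rightarrow> ('a set \<Rightarrow> 'b set) \<Rightarrow> bool" where
  "in_Pers \<epsilon> X W f \<longleftrightarrow>
     compact_space W \<and> Hausdorff_space W \<and> admissible X W f \<and>
     compact_space (glue X W f) \<and> Hausdorff_space (glue X W f) \<and>
     \<epsilon> \<subseteq> perspective_sets X W f"

definition quotient_topology :: "'a topology \<Rightarrow> ('a \<times> 'a) set \<Rightarrow> 'a set topology" where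
  "quotient_topology T R = topology (\<lambda>U. U \<subseteq> topspace T // R \<and> openin T (\<Union>U))"

end

theory Submission imports Defs begin

lemma adm_mono:
  assumes "admissible A B f" "closedin A D" "closedin A E" "D \<subseteq> E"
  shows "f D \<subseteq> f E"
proof -
  have "f E = f (D \<union> E)" using assms(4) by (simp add: Un_absorb1)
  also have "\<dots> = f D \<union> f E" using assms unfolding admissible_def Closed_def by auto
  finally show ?thesis by blast
qed

lemma adm_closed:
  assumes "admissible A B f" "closedin A D"
  shows "closedin B (f D)"
  using assms unfolding admissible_def Closed_def by auto

lemma glue_istopology:
  assumes adm: "admissible A B f"
  shows "istopology (\<lambda>U. U \<subseteq> Inl ` topspace A \<union> Inr ` topspace B \<and>
       glue_closed A B f ((Inl ` topspace A \<union> Inr ` topspace B) - U))"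
  unfolding istopology_def
proof (rule conjI; intro allI impI)
  let ?T = "Inl ` topspace A \<union> Inr ` topspace B"
  fix S T
  assume S: "S \<subseteq> ?T \<and> glue_closed A B f (?T - S)" and T: "T \<subseteq> ?T \<and> glue_closed A B f (?T - T)"
  have e: "?T - S \<inter> T = (?T - S) \<union> (?T - T)" by blast
  have c1: "closedin A (Inl -` (?T - S))" "closedin A (Inl -` (?T - T))"
    using S T unfolding glue_closed_def by auto
  have fe: "f (Inl -` (?T - S) \<union> Inl -` (?T - T)) = f (Inl -` (?T - S)) \<union> f (Inl -` (?T - T))"
    using adm c1 unfolding admissible_def Closed_def by auto
  have i1: "Inr ` f (Inl -` (?T - S)) \<subseteq> ?T - S" "Inr ` f (Inl -` (?T - T)) \<subseteq> ?T - T"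
    using S T unfolding glue_closed_def by simp_all
  have i: "Inr ` f (Inl -` (?T - S) \<union> Inl -` (?T - T)) \<subseteq> (?T - S) \<union> (?T - T)"
    unfolding fe image_Un using i1 by blast
  have c2: "closedin B (Inr -` (?T - S) \<union> Inr -` (?T - T))"
    using S T unfolding glue_closed_def by (simp add: closedin_Un)
  have c3: "closedin A (Inl -` (?T - S) \<union> Inl -` (?T - T))"
    using c1 by (simp add: closedin_Un)
  have sub: "S \<inter> T \<subseteq> ?T" "(?T - S) \<union> (?T - T) \<subseteq> ?T" using S by blast+
  have "glue_closed A B f ((?T - S) \<union> (?T - T))"
    unfolding glue_closed_def vimage_Un using sub(2) c2 c3 i by blast
  then show "S \<inter> T \<subseteq> ?T \<and> glue_closed A B f (?T - S \<inter> T)"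
    using sub(1) e by simp
next
  let ?T = "Inl ` topspace A \<union> Inr ` topspace B"
  fix K
  assume K: "\<forall>S\<in>K. S \<subseteq> ?T \<and> glue_closed A B f (?T - S)"
  have e1: "Inl -` (?T - \<Union>K) = \<Inter> (insert (topspace A) ((\<lambda>S. Inl -` (?T - S)) ` K))" by auto
  have e2: "Inr -` (?T - \<Union>K) = \<Inter> (insert (topspace B) ((\<lambda>S. Inr -` (?T - S)) ` K))" by auto
  have c1: "closedin A (Inl -` (?T - \<Union>K))" unfolding e1
    using K unfolding glue_closed_def by (intro closedin_Inter) auto
  have c2: "closedin B (Inr -` (?T - \<Union>K))" unfolding e2
    using K unfolding glue_closed_def by (intro closedin_Inter) auto
  have "Inr ` f (Inl -` (?T - \<Union>K)) \<subseteq> ?T - \<Union>K"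
  proof
    fix z :: "'a + 'b" assume z: "z \<in> Inr ` f (Inl -` (?T - \<Union>K))"
    have "f (Inl -` (?T - \<Union>K)) \<subseteq> f (topspace A)"
      using adm_mono[OF adm c1] by (simp add: e1 Inter_lower)
    also have "\<dots> \<subseteq> topspace B" using adm_closed[OF adm] closedin_subset by blast
    finally have zT: "z \<in> ?T" using z by blast
    have "z \<notin> S" if "S \<in> K" for S
    proof -
      have cS: "closedin A (Inl -` (?T - S))" using K that unfolding glue_closed_def by auto
      have "f (Inl -` (?T - \<Union>K)) \<subseteq> f (Inl -` (?T - S))"
        using adm_mono[OF adm c1 cS] that by blast
      then have "z \<in> ?T - S" using z K that unfolding glue_closed_def by blast
      then show ?thesis by blast
    qed
    then show "z \<in> ?T - \<Union>K" using zT by blast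
  qed
  then show "\<Union>K \<subseteq> ?T \<and> glue_closed A B f (?T - \<Union>K)"
    using K c1 c2 unfolding glue_closed_def by (simp only: simp_thms) blast
qed

lemma openin_glue:
  assumes "admissible A B f"
  shows "openin (glue A B f) U \<longleftrightarrow> U \<subseteq> Inl ` topspace A \<union> Inr ` topspace B \<and>
       glue_closed A B f ((Inl ` topspace A \<union> Inr ` topspace B) - U)"
  unfolding glue_def using glue_istopology[OF assms] by simp

lemma topspace_glue:
  assumes adm: "admissible A B f"
  shows "topspace (glue A B f) = Inl ` topspace A \<union> Inr ` topspace B"
proof -
  have "openin (glue A B f) (Inl ` topspace A \<union> Inr ` topspace B)"
    unfolding openin_glue[OF adm] glue_closed_def using adm unfolding admissible_def by simp
  then show ?thesis using openin_subset[of "glue A B f"] unfolding openin_glue[OF adm]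
    by (metis openin_topspace openin_glue[OF adm] subset_antisym)
qed

lemma openin_glue_Inl:
  assumes adm: "admissible A B f" and U: "openin A U"
  shows "openin (glue A B f) (Inl ` U)"
proof -
  have e1: "Inl -` ((Inl ` topspace A \<union> Inr ` topspace B) - Inl ` U) = topspace A - U" by auto
  have e2: "Inr -` ((Inl ` topspace A \<union> Inr ` topspace B) - Inl ` U) = topspace B" by auto
  have "closedin B (f (topspace A - U))" using adm_closed[OF adm] U by blast
  then have "f (topspace A - U) \<subseteq> topspace B" using closedin_subset by blast
  then show ?thesis unfolding openin_glue[OF adm] glue_closed_def e1 e2
    using U openin_subset by fastforce
qed

lemma continuous_map_glue_Inl:
  assumes adm: "admissible A B f"
  shows "continuous_map A (glue A B f) Inl"
  unfolding continuous_map_def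
proof (intro conjI allI impI)
  show "Inl \<in> topspace A \<rightarrow> topspace (glue A B f)" using topspace_glue[OF adm] by auto
  fix U assume U: "openin (glue A B f) U"
  have "{x \<in> topspace A. Inl x \<in> U} = topspace A - Inl -` ((Inl ` topspace A \<union> Inr ` topspace B) - U)"
    by auto
  then show "openin A {x \<in> topspace A. Inl x \<in> U}"
    using U unfolding openin_glue[OF adm] glue_closed_def by auto
qed


lemma quotient_istopology:
  assumes eq: "equiv (topspace T) R"
  shows "istopology (\<lambda>U. U \<subseteq> topspace T // R \<and> openin T (\<Union>U))"
  unfolding istopology_def
proof (rule conjI; intro allI impI)
  fix S V assume S: "S \<subseteq> topspace T // R \<and> openin T (\<Union>S)" and V: "V \<subseteq> topspace T // R \<and> openin T (\<Union>V)"
  have "\<Union>(S \<inter> V) = \<Union>S \<inter> \<Union>V"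
  proof
    show "\<Union>S \<inter> \<Union>V \<subseteq> \<Union>(S \<inter> V)"
    proof
      fix x assume "x \<in> \<Union>S \<inter> \<Union>V"
      then obtain a b where ab: "a \<in> S" "b \<in> V" "x \<in> a" "x \<in> b" by blast
      then have "a = b" using quotient_disj[OF eq, of a b] S V by blast
      then show "x \<in> \<Union>(S \<inter> V)" using ab by blast
    qed
  qed blast
  then show "S \<inter> V \<subseteq> topspace T // R \<and> openin T (\<Union>(S \<inter> V))"
    using S V by auto
next
  fix K assume K: "\<forall>S\<in>K. S \<subseteq> topspace T // R \<and> openin T (\<Union>S)"
  have "\<Union>(\<Union>K) = \<Union>(Union ` K)" by blast
  then show "\<Union>K \<subseteq> topspace T // R \<and> openin T (\<Union>(\<Union>K))"
    using K by auto
qed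

lemma openin_quotient_topology:
  assumes "equiv (topspace T) R"
  shows "openin (quotient_topology T R) U \<longleftrightarrow> U \<subseteq> topspace T // R \<and> openin T (\<Union>U)"
  unfolding quotient_topology_def using quotient_istopology[OF assms] by simp

lemma topspace_quotient_topology:
  assumes eq: "equiv (topspace T) R"
  shows "topspace (quotient_topology T R) = topspace T // R"
proof -
  have "openin (quotient_topology T R) (topspace T // R)"
    unfolding openin_quotient_topology[OF eq] Union_quotient[OF eq] by simp
  then have "topspace T // R \<subseteq> topspace (quotient_topology T R)" by (rule openin_subset)
  moreover have "topspace (quotient_topology T R) \<subseteq> topspace T // R"
    using openin_topspace[of "quotient_topology T R"] openin_quotient_topology[OF eq] by blast
  ultimately show ?thesis by blast
qed

lemma class_of_mem:
  assumes eq: "equiv A R" and c: "c \<in> A // R" and x: "x \<in> c"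
  shows "c = R `` {x}"
proof -
  obtain a where a: "c = R `` {a}" "a \<in> A" using c by (rule quotientE)
  then have "(a, x) \<in> R" using x by blast
  then show ?thesis using a equiv_class_eq[OF eq] by metis
qed

lemma quotient_Hausdorff_imp_closed:
  assumes eq: "equiv (topspace T) R"
    and H: "Hausdorff_space (quotient_topology T R)"
  shows "closedin (prod_topology T T) R"
  unfolding closedin_def
proof
  show "R \<subseteq> topspace (prod_topology T T)" using eq unfolding equiv_def refl_on_def by simp
  show "openin (prod_topology T T) (topspace (prod_topology T T) - R)"
  proof (subst openin_subopen, intro ballI)
    fix z assume z: "z \<in> topspace (prod_topology T T) - R"
    obtain a b where ab: "z = (a, b)" "a \<in> topspace T" "b \<in> topspace T" "(a, b) \<notin> R"
      using z by auto
    have ne: "R `` {a} \<noteq> R `` {b}" using eq_equiv_class_iff[OF eq ab(2,3)] ab(4) by blast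
    have q: "R `` {a} \<in> topspace (quotient_topology T R)" "R `` {b} \<in> topspace (quotient_topology T R)"
      using ab quotientI topspace_quotient_topology[OF eq] by metis+
    obtain U V where UV: "openin (quotient_topology T R) U" "openin (quotient_topology T R) V"
      "R `` {a} \<in> U" "R `` {b} \<in> V" "disjnt U V"
      using H q ne unfolding Hausdorff_space_def by metis
    have U: "U \<subseteq> topspace T // R" "openin T (\<Union>U)" and V: "V \<subseteq> topspace T // R" "openin T (\<Union>V)"
      using UV(1,2) openin_quotient_topology[OF eq] by auto
    have "z \<in> \<Union>U \<times> \<Union>V"
      using ab UV(3,4) equiv_class_self[OF eq] by blast
    moreover have "\<Union>U \<times> \<Union>V \<subseteq> topspace (prod_topology T T) - R"
    proof
      fix w assume w: "w \<in> \<Union>U \<times> \<Union>V"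
      then obtain x y c d where xy: "w = (x, y)" "c \<in> U" "d \<in> V" "x \<in> c" "y \<in> d" by blast
      have cx: "c = R `` {x}" using class_of_mem[OF eq] U(1) xy by blast
      have dy: "d = R `` {y}" using class_of_mem[OF eq] V(1) xy by blast
      have "c \<noteq> d" using UV(5) xy unfolding disjnt_def by blast
      then have "(x, y) \<notin> R" using cx dy equiv_class_eq[OF eq] by metis
      moreover have "x \<in> topspace T" "y \<in> topspace T" using U(2) V(2) xy openin_subset by blast+
      ultimately show "w \<in> topspace (prod_topology T T) - R" using xy by simp
    qed
    moreover have "openin (prod_topology T T) (\<Union>U \<times> \<Union>V)"
      using U V by (simp add: openin_prod_Times_iff)
    ultimately show "\<exists>W. openin (prod_topology T T) W \<and> z \<in> W \<and> W \<subseteq> topspace (prod_topology T T) - R"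
      by blast
  qed
qed

lemma closed_imp_quotient_Hausdorff:
  assumes eq: "equiv (topspace T) R"
    and cT: "compact_space T" and hT: "Hausdorff_space T"
    and cR: "closedin (prod_topology T T) R"
  shows "Hausdorff_space (quotient_topology T R)"
proof -
  have classclosed: "closedin T (R `` {a})" if "a \<in> topspace T" for a
  proof -
    have "continuous_map T (prod_topology T T) (\<lambda>y. (a, y))"
      using that by (intro continuous_map_pairedI) auto
    then have "closedin T {y \<in> topspace T. (a, y) \<in> R}"
      using cR closedin_continuous_map_preimage by blast
    moreover have "{y \<in> topspace T. (a, y) \<in> R} = R `` {a}"
      using eq unfolding equiv_def refl_on_def by auto
    ultimately show ?thesis by simp
  qed
  define inner where "inner U = {z \<in> topspace T. R `` {z} \<subseteq> U}" for U
  have inner_open: "openin T (inner U)" if U: "openin T U" for U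
  proof -
    define K where "K = topspace T - U"
    have "closedin (prod_topology T T) (R \<inter> (K \<times> topspace T))"
      using cR U unfolding K_def
      by (intro closedin_Int) (auto simp: closedin_prod_Times_iff closedin_diff)
    then have "compactin (prod_topology T T) (R \<inter> (K \<times> topspace T))"
      using closedin_compact_space compact_space_prod_topology cT by blast
    then have "compactin T (snd ` (R \<inter> (K \<times> topspace T)))"
      using image_compactin continuous_map_snd by blast
    then have c: "closedin T (snd ` (R \<inter> (K \<times> topspace T)))"
      using compactin_imp_closedin hT by blast
    have "inner U = topspace T - snd ` (R \<inter> (K \<times> topspace T))"
    proof
      show "inner U \<subseteq> topspace T - snd ` (R \<inter> (K \<times> topspace T))"
      proof
        fix z assume z: "z \<in> inner U"
        have "z \<notin> snd ` (R \<inter> (K \<times> topspace T))"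
        proof
          assume "z \<in> snd ` (R \<inter> (K \<times> topspace T))"
          then obtain x where "(x, z) \<in> R" "x \<in> K" by auto
          then have "(z, x) \<in> R" using eq unfolding equiv_def sym_def by blast
          then show False using z \<open>x \<in> K\<close> unfolding inner_def K_def by blast
        qed
        then show "z \<in> topspace T - snd ` (R \<inter> (K \<times> topspace T))" using z unfolding inner_def by blast
      qed
      show "topspace T - snd ` (R \<inter> (K \<times> topspace T)) \<subseteq> inner U"
      proof
        fix z assume z: "z \<in> topspace T - snd ` (R \<inter> (K \<times> topspace T))"
        have "R `` {z} \<subseteq> U"
        proof
          fix x assume "x \<in> R `` {z}"
          then have "(x, z) \<in> R" "x \<in> topspace T" using eq unfolding equiv_def sym_def refl_on_def by blast+
          then show "x \<in> U" using z unfolding K_def by force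
        qed
        then show "z \<in> inner U" using z unfolding inner_def by blast
      qed
    qed
    then show ?thesis using c by (simp add: closedin_def openin_diff)
  qed
  have inner_sat: "R `` {z} \<subseteq> inner U" if "z \<in> inner U" for z U
  proof
    fix w assume w: "w \<in> R `` {z}"
    then have "R `` {w} = R `` {z}" using eq equiv_class_eq[OF eq] by (metis Image_singleton_iff sym_def equiv_def)
    moreover have "w \<in> topspace T" using w eq unfolding equiv_def refl_on_def by blast
    ultimately show "w \<in> inner U" using that unfolding inner_def by simp
  qed
  have inner_sub: "inner U \<subseteq> U" for U
    using equiv_class_self[OF eq] unfolding inner_def by blast
  define lift where "lift U = {c \<in> topspace T // R. c \<subseteq> inner U}" for U
  have lift_open: "openin (quotient_topology T R) (lift U)" if "openin T U" for U
  proof -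
    have "\<Union>(lift U) = inner U"
    proof
      show "\<Union>(lift U) \<subseteq> inner U" unfolding lift_def by blast
      show "inner U \<subseteq> \<Union>(lift U)"
      proof
        fix z assume z: "z \<in> inner U"
        then have "z \<in> topspace T" unfolding inner_def by blast
        then have "R `` {z} \<in> topspace T // R" "z \<in> R `` {z}"
          using quotientI equiv_class_self[OF eq] by metis+
        then show "z \<in> \<Union>(lift U)" unfolding lift_def
          using inner_sat[OF z] by blast
      qed
    qed
    then show ?thesis unfolding openin_quotient_topology[OF eq] using inner_open[OF that]
      unfolding lift_def by auto
  qed
  show ?thesis unfolding Hausdorff_space_def topspace_quotient_topology[OF eq]
  proof (intro allI impI)
    fix c d assume cdd: "c \<in> topspace T // R \<and> d \<in> topspace T // R \<and> c \<noteq> d"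
    then have c: "c \<in> topspace T // R" and d: "d \<in> topspace T // R" and cd: "c \<noteq> d" by auto
    obtain a where a: "c = R `` {a}" "a \<in> topspace T" using c by (rule quotientE)
    obtain b where b: "d = R `` {b}" "b \<in> topspace T" using d by (rule quotientE)
    have "c \<inter> d = {}" using quotient_disj[OF eq c d] cd by blast
    moreover have "compactin T c" "compactin T d"
      using a b classclosed closedin_compact_space cT by blast+
    ultimately obtain U V where UV: "openin T U" "openin T V" "c \<subseteq> U" "d \<subseteq> V" "disjnt U V"
      using hT unfolding Hausdorff_space_compact_sets disjnt_def by metis
    have inl: "e \<in> lift W" if e: "e \<in> topspace T // R" "e \<subseteq> W" for e W
    proof -
      have "e \<subseteq> inner W"
      proof
        fix w assume w: "w \<in> e"
        have "e = R `` {w}" using class_of_mem[OF eq e(1) w] .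
        moreover have "w \<in> topspace T" using w e(1) Union_quotient[OF eq] by blast
        ultimately show "w \<in> inner W" using e(2) unfolding inner_def by simp
      qed
      then show ?thesis using e(1) unfolding lift_def by blast
    qed
    have "c \<in> lift U" using inl c UV(3) by blast
    moreover have "d \<in> lift V" using inl d UV(4) by blast
    moreover have "disjnt (lift U) (lift V)"
    proof -
      have "False" if "e \<in> lift U" "e \<in> lift V" for e
      proof -
        have "e \<subseteq> U" "e \<subseteq> V" "e \<in> topspace T // R"
          using that inner_sub[of U] inner_sub[of V] unfolding lift_def by blast+
        moreover have "e \<noteq> {}" using in_quotient_imp_non_empty[OF eq] calculation(3) .
        ultimately show False using UV(5) unfolding disjnt_def by blast
      qed
      then show ?thesis unfolding disjnt_def by blast
    qed
    ultimately show "\<exists>U V. openin (quotient_topology T R) U \<and> openin (quotient_topology T R) V \<and>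
                 c \<in> U \<and> d \<in> V \<and> disjnt U V"
      using lift_open UV(1,2) by blast
  qed
qed


lemma un_left: "x \<in> A \<union> B \<Longrightarrow> x \<notin> B \<Longrightarrow> x \<in> A" by blast

theorem mainTheorem5:
  fixes C :: "'i \<Rightarrow> 'a topology" and \<Gamma> :: "'i set"
    and Y :: "'y topology" and f :: "('i \<times> 'a) set \<Rightarrow> 'y set"
  assumes "\<And>i. i \<in> \<Gamma> \<Longrightarrow> compact_space (C i) \<and> Hausdorff_space (C i)"
    and "compact_space Y" and "Hausdorff_space Y"
    and "admissible (sum_topology C \<Gamma>) Y f"
    and "compact_space (glue (sum_topology C \<Gamma>) Y f)"
    and "Hausdorff_space (glue (sum_topology C \<Gamma>) Y f)"
  shows "in_Pers
           {e. e \<subseteq> topspace (sum_topology C \<Gamma>) \<times> topspace (sum_topology C \<Gamma>) \<and>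
               (\<exists>F \<subseteq> \<Gamma> \<times> \<Gamma>. finite (F - Id) \<and> e \<subseteq> {(x, y). (fst x, fst y) \<in> F})}
           (sum_topology C \<Gamma>) Y f
     \<longleftrightarrow> Hausdorff_space
           (quotient_topology (glue (sum_topology C \<Gamma>) Y f)
              (Id_on (topspace (glue (sum_topology C \<Gamma>) Y f)) \<union>
               (\<Union>i\<in>\<Gamma>. (Inl ` ({i} \<times> topspace (C i))) \<times> (Inl ` ({i} \<times> topspace (C i))))))"
proof -
  let ?S = "sum_topology C \<Gamma>"
  let ?G = "glue (sum_topology C \<Gamma>) Y f"
  let ?GG = "prod_topology ?G ?G"
  let ?B = "\<lambda>i. Inl ` ({i} \<times> topspace (C i)) :: ('i \<times> 'a + 'y) set"
  let ?E = "\<Union>i\<in>\<Gamma>. ?B i \<times> ?B i"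
  let ?R = "Id_on (topspace ?G) \<union> ?E"
  let ?P = "Inl ` topspace ?S \<times> Inl ` topspace ?S :: (('i \<times> 'a + 'y) \<times> ('i \<times> 'a + 'y)) set"
  let ?img = "\<lambda>e. (\<lambda>(a, b). (Inl a, Inl b)) ` e :: (('i \<times> 'a + 'y) \<times> ('i \<times> 'a + 'y)) set"
  let ?eps = "{e. e \<subseteq> topspace (sum_topology C \<Gamma>) \<times> topspace (sum_topology C \<Gamma>) \<and>
               (\<exists>F \<subseteq> \<Gamma> \<times> \<Gamma>. finite (F - Id) \<and> e \<subseteq> {(x, y). (fst x, fst y) \<in> F})}"
  have adm: "admissible ?S Y f" by fact
  have cG: "compact_space ?G" and hG: "Hausdorff_space ?G" by fact+
  have TG: "topspace ?G = Inl ` topspace ?S \<union> Inr ` topspace Y"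
    by (rule topspace_glue[OF adm])
  have Bsub: "?B i \<subseteq> topspace ?G" if "i \<in> \<Gamma>" for i
    using that TG by auto
  have Bopen: "openin ?G (?B i)" if i: "i \<in> \<Gamma>" for i
  proof -
    have "{x. (j, x) \<in> {i} \<times> topspace (C i)} = (if j = i then topspace (C j) else {})" for j
      by auto
    then have "openin ?S ({i} \<times> topspace (C i))"
      using i unfolding openin_sum_topology by auto
    then show ?thesis by (rule openin_glue_Inl[OF adm])
  qed
  have Bcomp: "compactin ?G (?B i)" if i: "i \<in> \<Gamma>" for i
  proof -
    have "continuous_map (C i) ?G (Inl \<circ> (\<lambda>x. (i, x)))"
      using continuous_map_compose[OF continuous_map_component_injection[OF i] continuous_map_glue_Inl[OF adm]] .
    moreover have "compactin (C i) (topspace (C i))"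
      using assms(1)[OF i] compact_space_def by blast
    ultimately have "compactin ?G ((Inl \<circ> (\<lambda>x. (i, x))) ` topspace (C i))"
      using image_compactin by blast
    moreover have "(Inl \<circ> (\<lambda>x. (i, x))) ` topspace (C i) = ?B i" by auto
    ultimately show ?thesis by simp
  qed
  have eqv: "equiv (topspace ?G) ?R"
    unfolding equiv_def refl_on_def sym_def trans_def
  proof (intro conjI allI impI)
    show "?R \<subseteq> topspace ?G \<times> topspace ?G" using Bsub by blast
    show "\<forall>x\<in>topspace ?G. (x, x) \<in> ?R" by auto
  next
    fix x y assume "(x, y) \<in> ?R" then show "(y, x) \<in> ?R" by blast
  next
    fix x y z assume xy: "(x, y) \<in> ?R" and yz: "(y, z) \<in> ?R"
    show "(x, z) \<in> ?R"
    proof (cases "x = y \<or> y = z")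
      case True then show ?thesis using xy yz by auto
    next
      case False
      then obtain i j where "i \<in> \<Gamma>" "j \<in> \<Gamma>" "(x, y) \<in> ?B i \<times> ?B i" "(y, z) \<in> ?B j \<times> ?B j"
        using xy yz by blast
      moreover then have "i = j" by auto
      ultimately show ?thesis by blast
    qed
  qed
  have Q: "Hausdorff_space (quotient_topology ?G ?R) \<longleftrightarrow> closedin ?GG ?R"
    using quotient_Hausdorff_imp_closed[OF eqv] closed_imp_quotient_Hausdorff[OF eqv cG hG] by blast
  have persp: "e \<in> perspective_sets ?S Y f \<longleftrightarrow>
      e \<subseteq> topspace ?S \<times> topspace ?S \<and>
      ?GG closure_of ?img e \<inter> ((topspace ?G \<times> topspace ?G) - ?P) \<subseteq> {(Inr p, Inr p) | p. p \<in> topspace Y}" for e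
    unfolding perspective_sets_def Let_def by simp
  have P: "in_Pers ?eps ?S Y f \<longleftrightarrow> ?eps \<subseteq> perspective_sets ?S Y f"
    unfolding in_Pers_def using assms by blast
  have EP: "?E \<subseteq> ?P" by auto
  have "?eps \<subseteq> perspective_sets ?S Y f \<longleftrightarrow> closedin ?GG ?R"
  proof
    assume L: "?eps \<subseteq> perspective_sets ?S Y f"
    let ?e0 = "\<Union>i\<in>\<Gamma>. ({i} \<times> topspace (C i)) \<times> ({i} \<times> topspace (C i))"
    have e0in: "?e0 \<in> ?eps"
    proof -
      have "Id_on \<Gamma> - Id = {}" by blast
      then have f1: "finite (Id_on \<Gamma> - Id)" by (metis finite.emptyI)
      have f2: "Id_on \<Gamma> \<subseteq> \<Gamma> \<times> \<Gamma>" and f3: "?e0 \<subseteq> {(x, y). (fst x, fst y) \<in> Id_on \<Gamma>}"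
        by auto
      have f4: "?e0 \<subseteq> topspace ?S \<times> topspace ?S" by auto
      show ?thesis unfolding mem_Collect_eq
        by (intro conjI exI[of _ "Id_on \<Gamma>"] f1 f2 f3 f4)
    qed
    then have pe0: "?GG closure_of ?img ?e0 \<inter> ((topspace ?G \<times> topspace ?G) - ?P) \<subseteq> {(Inr p, Inr p) | p. p \<in> topspace Y}"
      using subsetD[OF L e0in] persp by (simp only:)
    have ie: "?img ?e0 = ?E" by force
    have cE: "?GG closure_of ?E \<subseteq> ?R"
    proof
      fix z assume z: "z \<in> ?GG closure_of ?E"
      then have zT: "z \<in> topspace ?G \<times> topspace ?G"
        using closure_of_subset_topspace by fastforce
      show "z \<in> ?R"
      proof (cases "z \<in> ?P")
        case False
        then have "z \<in> {(Inr p, Inr p) | p. p \<in> topspace Y}" using pe0 z zT unfolding ie by blast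
        then show ?thesis using zT by auto
      next
        case True
        then obtain i x j y where zz: "z = (Inl (i, x), Inl (j, y))" "i \<in> \<Gamma>" "j \<in> \<Gamma>"
          "x \<in> topspace (C i)" "y \<in> topspace (C j)" by auto
        show ?thesis
        proof (cases "i = j")
          case True then show ?thesis using zz by blast
        next
          case False
          have op: "openin ?GG (?B i \<times> ?B j)" using Bopen zz by (simp add: openin_prod_Times_iff)
          have zin: "z \<in> ?B i \<times> ?B j" using zz by auto
          have "\<exists>w. w \<in> ?E \<and> w \<in> ?B i \<times> ?B j"
            using z[unfolded in_closure_of, THEN conjunct2, rule_format, OF conjI[OF zin op]] .
          then obtain w where "w \<in> ?E" "w \<in> ?B i \<times> ?B j" by (elim exE conjE)
          then show ?thesis using False by auto
        qed
      qed
    qed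
    have "closedin ?GG (Id_on (topspace ?G))"
    proof -
      have idd: "Id_on (topspace ?G) = (\<lambda>x. (x, x)) ` topspace ?G" by (auto simp: Id_on_def)
      show ?thesis unfolding idd by (rule hG[unfolded Hausdorff_space_closedin_diagonal])
    qed
    then have cId: "?GG closure_of (Id_on (topspace ?G)) = Id_on (topspace ?G)"
      by (simp only: closure_of_eq)
    have "?GG closure_of ?R = ?GG closure_of (Id_on (topspace ?G)) \<union> ?GG closure_of ?E"
      by (rule closure_of_Un)
    then have c1: "?GG closure_of ?R \<subseteq> ?R" using cE cId by blast
    have "?R \<subseteq> topspace ?G \<times> topspace ?G" using eqv unfolding equiv_def refl_on_def by (elim conjE)
    then have "?R \<subseteq> ?GG closure_of ?R" by (intro closure_of_subset) (simp only: topspace_prod_topology)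
    with c1 have "?GG closure_of ?R = ?R" by (rule subset_antisym)
    then show "closedin ?GG ?R" by (simp only: closure_of_eq)
  next
    assume cR: "closedin ?GG ?R"
    show "?eps \<subseteq> perspective_sets ?S Y f"
    proof
      fix e assume e: "e \<in> ?eps"
      then obtain F where F: "F \<subseteq> \<Gamma> \<times> \<Gamma>" "finite (F - Id)" "e \<subseteq> {(x, y). (fst x, fst y) \<in> F}"
        and eS: "e \<subseteq> topspace ?S \<times> topspace ?S" by blast
      let ?K = "\<Union>((\<lambda>(i, j). ?B i \<times> ?B j) ` (F - Id))"
      have "compactin ?GG ?K"
      proof (rule compactin_Union)
        show "finite ((\<lambda>(i, j). ?B i \<times> ?B j) ` (F - Id))" using F(2) by simp
        fix K assume "K \<in> (\<lambda>(i, j). ?B i \<times> ?B j) ` (F - Id)"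
        then obtain p where p: "p \<in> F - Id" "K = (\<lambda>(i, j). ?B i \<times> ?B j) p" by (rule imageE)
        obtain i j where ij: "p = (i, j)" by (cases p)
        then have "i \<in> \<Gamma>" "j \<in> \<Gamma>" "K = ?B i \<times> ?B j" using p F(1) by auto
        then show "compactin ?GG K" using Bcomp by (simp add: compactin_Times)
      qed
      then have cK: "closedin ?GG ?K"
        using compactin_imp_closedin Hausdorff_space_prod_topology hG by blast
      have "?img e \<subseteq> ?R \<union> ?K"
      proof
        fix w assume "w \<in> ?img e"
        then obtain a b where ab: "w = (Inl a, Inl b)" "(a, b) \<in> e" by auto
        then have Fab: "(fst a, fst b) \<in> F" and abS: "a \<in> topspace ?S" "b \<in> topspace ?S"
          using F(3) eS by auto
        show "w \<in> ?R \<union> ?K"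
        proof (cases "fst a = fst b")
          case True
          then have "w \<in> ?B (fst a) \<times> ?B (fst a)" using ab abS by (cases a, cases b) auto
          moreover have "fst a \<in> \<Gamma>" using abS by (cases a) auto
          ultimately show ?thesis by blast
        next
          case False
          then have "(fst a, fst b) \<in> F - Id" using Fab by auto
          then have mem: "?B (fst a) \<times> ?B (fst b) \<in> (\<lambda>(i, j). ?B i \<times> ?B j) ` (F - Id)"
            by (rule rev_image_eqI) simp
          have "w \<in> ?B (fst a) \<times> ?B (fst b)" using ab abS by (cases a, cases b) auto
          with mem have "w \<in> ?K" by (rule UnionI)
          then show ?thesis by (rule UnI2)
        qed
      qed
      then have cl: "?GG closure_of ?img e \<subseteq> ?R \<union> ?K"
        by (rule closure_of_minimal[OF _ closedin_Un[OF cR cK]])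
      have KP: "?K \<subseteq> ?P"
      proof
        fix w assume "w \<in> ?K"
        then obtain X where X: "w \<in> X" "X \<in> (\<lambda>(i, j). ?B i \<times> ?B j) ` (F - Id)" by (rule UnionE)
        from X(2) obtain p where p: "p \<in> F - Id" "X = (\<lambda>(i, j). ?B i \<times> ?B j) p" by (rule imageE)
        obtain i j where "p = (i, j)" by (cases p)
        then have ij: "(i, j) \<in> \<Gamma> \<times> \<Gamma>" using p(1) F(1) by blast
        have "X = ?B i \<times> ?B j" using p(2) \<open>p = (i, j)\<close> by simp
        then have wB: "w \<in> ?B i \<times> ?B j" using X(1) by simp
        have BS: "?B k \<subseteq> Inl ` topspace ?S" if "k \<in> \<Gamma>" for k using that by (intro image_mono) auto
        have i: "i \<in> \<Gamma>" and j: "j \<in> \<Gamma>" using ij by (simp_all only: mem_Sigma_iff)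
        obtain u v where uv: "w = (u, v)" "u \<in> ?B i" "v \<in> ?B j" using wB by (elim SigmaE)
        have "u \<in> Inl ` topspace ?S" by (rule subsetD[OF BS[OF i] uv(2)])
        moreover have "v \<in> Inl ` topspace ?S" by (rule subsetD[OF BS[OF j] uv(3)])
        ultimately show "w \<in> ?P" unfolding uv(1) by (rule SigmaI)
      qed
      have fin: "?GG closure_of ?img e \<inter> ((topspace ?G \<times> topspace ?G) - ?P) \<subseteq> {(Inr p, Inr p) | p. p \<in> topspace Y}"
      proof
        fix z assume z: "z \<in> ?GG closure_of ?img e \<inter> ((topspace ?G \<times> topspace ?G) - ?P)"
        have zc: "z \<in> ?R \<union> ?K" using z cl by (elim IntE) (rule subsetD)
        have zP: "z \<notin> ?P" using z by (elim IntE DiffE)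
        have zK: "z \<notin> ?K" using zP KP by (intro notI) (elim notE subsetD)
        have zE: "z \<notin> ?E" using zP EP by (intro notI) (elim notE subsetD)
        have "z \<in> Id_on (topspace ?G)" using un_left[OF un_left[OF zc zK] zE] .
        then obtain w where w: "z = (w, w)" "w \<in> topspace ?G" by (elim Id_onE) simp
        then have "w \<notin> Inl ` topspace ?S" using z by blast
        then obtain p where "w = Inr p" "p \<in> topspace Y" using w(2) TG by auto
        then show "z \<in> {(Inr p, Inr p) | p. p \<in> topspace Y}" using w by blast
      qed
      show "e \<in> perspective_sets ?S Y f" unfolding persp by (intro conjI eS fin)
    qed
  qed
  then show ?thesis using P Q by simp
qed

end
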